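(* Let $c_0,c_1>0$ be sufficiently large numerical constants, let $K\ge2$ be a fixed integer, and define $\beta_1=T^{-c_0}$, $\beta_t=\frac{c_1\log T}{T}\min\{\beta_1(1+\frac{c_1\log T}{T})^t,1\}$ for $2\le t\le T$, $\alpha_t=1-\beta_t$, $\overline\alpha_t=\prod_{i=1}^t\alpha_i$. For $2\le t\le T$ let $\tau_{t,0}=1-\overline\alpha_t$, $\tau_{t,K-1}=1-\overline\alpha_{t-1}$, $\tau_{t,i}=\tau_{t,0}-\frac{i}{K-1}(\tau_{t,0}-\tau_{t,K-1})$ for $0\le i\le K-1$, let $\psi_i(\tau)=\prod_{i'\ne i}(\tau-\tau_{t,i'})/\prod_{i'\ne i}(\tau_{t,i}-\tau_{t,i'})$ (products over $0\le i'\le K-1$, $i'\ne i$) and $\gamma_{t,i}(\tau')=\int_{\tau'}^{\tau_{t,0}}\psi_i(\tau)d\tau$. Then for $T$ large enough: (a) $\alpha_t\ge 1-\frac{c_1\log T}{T}\ge\frac12$ for $1\le t\le T$; (b) $\frac12\frac{1-\alpha_t}{1-\overline\alpha_t}\le\frac12\frac{1-\alpha_t}{\alpha_t-\overline\alpha_t}\le\frac{1-\alpha_t}{1-\overline\alpha_{t-1}}\le\frac{4c_1\log T}{T}$ for $2\le t\le T$; (c) $1\le\frac{1-\overline\alpha_t}{1-\overline\alpha_{t-1}}\le1+\frac{4c_1\log T}{T}$ for $2\le t\le T$; (d) $\overline\alpha_T\le T^{-c_2}$ for a sufficiently large constant $c_2$; (e) $\frac{\overline\alpha_{t+1}}{1-\overline\alpha_{t+1}}\le\frac{\overline\alpha_t}{1-\overline\alpha_t}\le\frac{4\overline\alpha_{t+1}}{1-\overline\alpha_{t+1}}$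 for $1\le t<T$; (f) $\Big|\frac{\tau_{t,i_1}-\tau_{t,i_2}}{\tau_{t,i_3}(1-\tau_{t,i_4})}\Big|\le 8c_1\frac{\log T}{T}$ for $2\le t\le T$ and $0\le i_1,i_2,i_3,i_4\le K-1$; (g) $|\gamma_{t,i}(\tau_{t,j})|\le 2^K(\tau_{t,0}-\tau_{t,j})$ for all $0\le i,j\le K-1$; (h) $1-\tau_{t,i}\asymp 1-\tau_{t,j}$ and $\tau_{t,i}\asymp\tau_{t,j}$ for all $0\le i,j\le K-1$, $2\le t\le T$.
   Context: $a\asymp b$ means $c\,b\le a\le C\,b$ for positive numerical constants $c,C$ independent of $T$, $t$, $i$, $j$. *)

theory Defs
  imports "HOL-Analysis.Analysis"
begin

definition beta :: "real \<Rightarrow> real \<Rightarrow> nat \<Rightarrow> nat \<Rightarrow> real" where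
  "beta c0 c1 T t =
     (if t = 1 then real T powr (- c0)
      else c1 * ln (real T) / real T *
           min (real T powr (- c0) * (1 + c1 * ln (real T) / real T) ^ t) 1)"

definition alpha :: "real \<Rightarrow> real \<Rightarrow> nat \<Rightarrow> nat \<Rightarrow> real" where
  "alpha c0 c1 T t = 1 - beta c0 c1 T t"

definition alphabar :: "real \<Rightarrow> real \<Rightarrow> nat \<Rightarrow> nat \<Rightarrow> real" where
  "alphabar c0 c1 T t = (\<Prod>i\<in>{1..t}. alpha c0 c1 T i)"

definition tau :: "real \<Rightarrow> real \<Rightarrow> nat \<Rightarrow> nat \<Rightarrow> nat \<Rightarrow> nat \<Rightarrow> real" where
  "tau c0 c1 K T t i =
     (1 - alphabar c0 c1 T t)
     - real i / real (K - 1) * ((1 - alphabar c0 c1 T t) - (1 - alphabar c0 c1 T (t - 1)))"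

definition psi :: "real \<Rightarrow> real \<Rightarrow> nat \<Rightarrow> nat \<Rightarrow> nat \<Rightarrow> nat \<Rightarrow> real \<Rightarrow> real" where
  "psi c0 c1 K T t i x =
     (\<Prod>i'\<in>{0..K-1} - {i}. (x - tau c0 c1 K T t i')) /
     (\<Prod>i'\<in>{0..K-1} - {i}. (tau c0 c1 K T t i - tau c0 c1 K T t i'))"

definition oint :: "real \<Rightarrow> real \<Rightarrow> (real \<Rightarrow> real) \<Rightarrow> real" where
  "oint a b f = (if a \<le> b then integral {a..b} f else - integral {b..a} f)"

definition gamma :: "real \<Rightarrow> real \<Rightarrow> nat \<Rightarrow> nat \<Rightarrow> nat \<Rightarrow> nat \<Rightarrow> real \<Rightarrow> real" where
  "gamma c0 c1 K T t i x = oint x (tau c0 c1 K T t 0) (psi c0 c1 K T t i)"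

end

theory Submission
  imports Defs "HOL-Real_Asymp.Real_Asymp"
begin


lemma prod_rev_fact: "(\<Prod>k\<in>{0..<a}. real (a - k)) = fact a"
  by (simp add: fact_prod_rev)

lemma prod_shift_fact: "(\<Prod>k\<in>{a+1..b}. real (k - a)) = fact (b - a)"
proof (cases "a \<le> b")
  case True
  have "(\<Prod>k\<in>{a+1..b}. real (k - a)) = (\<Prod>k\<in>{1+a..(b-a)+a}. real (k - a))"
    using True by (simp add: add.commute)
  also have "\<dots> = (\<Prod>j\<in>{1..b-a}. real (j + a - a))"
    by (rule prod.shift_bounds_cl_nat_ivl)
  also have "\<dots> = fact (b - a)" by (simp add: fact_prod)
  finally show ?thesis .
next
  case False then show ?thesis by simp
qed

lemma prod_b:
  assumes "m \<le> n"
  shows "(\<Prod>k\<in>{0..n}. (if k \<le> m then real (m+1-k) else real (k - m))) = fact (m+1) * fact (n-m)"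
proof -
  have U: "{0..n} = {0..<m+1} \<union> {m+1..n}" using assms by auto
  have "(\<Prod>k\<in>{0..n}. (if k \<le> m then real (m+1-k) else real (k - m)))
     = (\<Prod>k\<in>{0..<m+1}. (if k \<le> m then real (m+1-k) else real (k - m))) *
       (\<Prod>k\<in>{m+1..n}. (if k \<le> m then real (m+1-k) else real (k - m)))"
    unfolding U by (rule prod.union_disjoint) auto
  also have "(\<Prod>k\<in>{0..<m+1}. (if k \<le> m then real (m+1-k) else real (k - m))) = (\<Prod>k\<in>{0..<m+1}. real (m+1-k))"
    by (rule prod.cong) auto
  also have "\<dots> = fact (m+1)" by (rule prod_rev_fact)
  also have "(\<Prod>k\<in>{m+1..n}. (if k \<le> m then real (m+1-k) else real (k - m))) = (\<Prod>k\<in>{m+1..n}. real (k - m))"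
    by (rule prod.cong) auto
  also have "\<dots> = fact (n - m)" by (rule prod_shift_fact)
  finally show ?thesis .
qed

lemma prod_d:
  assumes "i \<le> n"
  shows "(\<Prod>k\<in>{0..n}-{i}. \<bar>real i - real k\<bar>) = fact i * fact (n-i)"
proof -
  have U: "{0..n}-{i} = {0..<i} \<union> {i+1..n}" using assms by auto
  have "(\<Prod>k\<in>{0..n}-{i}. \<bar>real i - real k\<bar>) = (\<Prod>k\<in>{0..<i}. \<bar>real i - real k\<bar>) * (\<Prod>k\<in>{i+1..n}. \<bar>real i - real k\<bar>)"
    unfolding U by (rule prod.union_disjoint) auto
  also have "(\<Prod>k\<in>{0..<i}. \<bar>real i - real k\<bar>) = (\<Prod>k\<in>{0..<i}. real (i - k))"
    by (rule prod.cong) (auto simp: of_nat_diff)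
  also have "\<dots> = fact i" by (rule prod_rev_fact)
  also have "(\<Prod>k\<in>{i+1..n}. \<bar>real i - real k\<bar>) = (\<Prod>k\<in>{i+1..n}. real (k - i))"
    by (rule prod.cong) (auto simp: of_nat_diff)
  also have "\<dots> = fact (n - i)" by (rule prod_shift_fact)
  finally show ?thesis .
qed

lemma nat_fact_ineq:
  assumes "i \<le> m" "m \<le> n"
  shows "fact (m+1) * fact (n-m) \<le> (2::nat)^(n+1) * fact i * fact (n-i) * (m+1-i)"
proof -
  define d where "d = m+1-i"
  have e1: "fact i * fact d * ((m+1) choose i) = (fact (m+1)::nat)"
    using binomial_fact_lemma[of i "m+1"] assms by (simp add: d_def)
  have e2: "fact d = d * (fact (m-i)::nat)"
    using assms by (simp add: Suc_diff_le d_def)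
  have e3: "fact (m-i) * fact (n-i-(m-i)) * ((n-i) choose (m-i)) = (fact (n-i)::nat)"
    using binomial_fact_lemma[of "m-i" "n-i"] assms by simp
  have e4: "n-i-(m-i) = n - m" using assms by simp
  have c1: "(n-i) choose (m-i) \<ge> 1" using assms zero_less_binomial[of "m-i" "n-i"] by linarith
  have f1: "fact (m-i) * fact (n-m) \<le> (fact (n-i)::nat)"
    using e3 e4 c1 by (metis mult_le_cancel1 mult.right_neutral not_one_le_zero mult_le_mono2 order_refl)
  have c2: "(m+1) choose i \<le> 2^(n+1)"
  proof -
    have "(2::nat)^(m+1) \<le> 2^(n+1)" by (rule power_increasing) (use assms in auto)
    then show ?thesis using binomial_le_pow2[of "m+1" i] by linarith
  qed
  have "fact (m+1) * fact (n-m) = ((m+1) choose i) * fact i * (m+1-i) * (fact (m-i) * fact (n-m))"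
    by (simp only: e1[symmetric] e2 d_def[symmetric] mult_ac)
  also have "\<dots> \<le> 2^(n+1) * fact i * (m+1-i) * fact (n-i)"
    using c2 f1 by (intro mult_mono) auto
  finally show ?thesis by (simp add: algebra_simps)
qed



lemma lag_up:
  fixes s :: real
  assumes "i \<le> n" "real i \<le> s" "s \<le> real n"
  shows "(\<Prod>k\<in>{0..n}-{i}. \<bar>s - real k\<bar>) \<le> 2^(n+1) * (\<Prod>k\<in>{0..n}-{i}. \<bar>real i - real k\<bar>)"
proof -
  define m where "m = nat \<lfloor>s\<rfloor>"
  have s0: "s \<ge> 0" using assms by simp
  have ms: "real m \<le> s" "s < real m + 1" using s0 unfolding m_def by linarith+
  have im: "i \<le> m" using ms assms by linarith
  have mn: "m \<le> n" using ms assms by linarith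
  define b where "b k = (if k \<le> m then real (m+1-k) else real (k - m))" for k
  have bnd: "\<bar>s - real k\<bar> \<le> b k" for k
    using ms by (auto simp: b_def of_nat_diff)
  have "(\<Prod>k\<in>{0..n}-{i}. \<bar>s - real k\<bar>) \<le> (\<Prod>k\<in>{0..n}-{i}. b k)"
    by (rule prod_mono) (use bnd in auto)
  moreover have "b i * (\<Prod>k\<in>{0..n}-{i}. b k) = fact (m+1) * fact (n-m)"
    using prod.remove[of "{0..n}" i b] prod_b[OF mn] assms by (simp add: b_def)
  moreover have bi: "b i = real (m+1-i)" "b i > 0" using im by (auto simp: b_def)
  moreover have "(fact (m+1) * fact (n-m) :: real) \<le> 2^(n+1) * fact i * fact (n-i) * real (m+1-i)"
    using nat_fact_ineq[OF im mn] by (metis (mono_tags, lifting) of_nat_fact of_nat_le_iff of_nat_mult of_nat_numeral of_nat_power)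
  ultimately have "(\<Prod>k\<in>{0..n}-{i}. \<bar>s - real k\<bar>) \<le> 2^(n+1) * fact i * fact (n-i)"
    by (smt (verit, ccfv_SIG) mult.commute mult_le_cancel_left_pos)
  then show ?thesis using prod_d[OF assms(1)] by simp
qed

lemma lag_down:
  fixes s :: real
  assumes "i \<le> n" "s \<le> real i" "0 \<le> s"
  shows "(\<Prod>k\<in>{0..n}-{i}. \<bar>s - real k\<bar>) \<le> 2^(n+1) * (\<Prod>k\<in>{0..n}-{i}. \<bar>real i - real k\<bar>)"
proof -
  have bij: "bij_betw (\<lambda>k. n - k) ({0..n}-{n-i}) ({0..n}-{i})"
    by (rule bij_betw_byWitness[where f'="\<lambda>k. n - k"]) (use assms in auto)
  have r: "(\<Prod>k\<in>{0..n}-{i}. f k) = (\<Prod>k\<in>{0..n}-{n-i}. f (n - k))" for f :: "nat \<Rightarrow> real"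
    using prod.reindex_bij_betw[OF bij, of f] by simp
  have e1: "(\<Prod>k\<in>{0..n}-{i}. \<bar>s - real k\<bar>) = (\<Prod>k\<in>{0..n}-{n-i}. \<bar>(real n - s) - real k\<bar>)"
    unfolding r by (rule prod.cong) (auto simp: of_nat_diff)
  have e2: "(\<Prod>k\<in>{0..n}-{i}. \<bar>real i - real k\<bar>) = (\<Prod>k\<in>{0..n}-{n-i}. \<bar>real (n-i) - real k\<bar>)"
    unfolding r by (rule prod.cong) (use assms in \<open>auto simp: of_nat_diff\<close>)
  show ?thesis unfolding e1 e2
    by (rule lag_up) (use assms in \<open>auto simp: of_nat_diff\<close>)
qed

lemma lag_nat:
  fixes s :: real
  assumes "i \<le> n" "0 \<le> s" "s \<le> real n"
  shows "(\<Prod>k\<in>{0..n}-{i}. \<bar>s - real k\<bar>) \<le> 2^(n+1) * (\<Prod>k\<in>{0..n}-{i}. \<bar>real i - real k\<bar>)"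
  using lag_up[of i n s] lag_down[of i n s] assms by linarith

lemma lag_scaled:
  fixes s h t0 :: real
  assumes "h > 0" "i \<le> n" "0 \<le> s" "s \<le> real n"
  shows "\<bar>(\<Prod>k\<in>{0..n}-{i}. ((t0 - s*h) - (t0 - real k * h))) /
          (\<Prod>k\<in>{0..n}-{i}. ((t0 - real i*h) - (t0 - real k * h)))\<bar> \<le> 2^(n+1)"
proof -
  have a: "(\<Prod>k\<in>{0..n}-{i}. ((t0 - x*h) - (t0 - real k * h))) = h ^ card ({0..n}-{i}) * (\<Prod>k\<in>{0..n}-{i}. (real k - x))" for x
  proof -
    have "(\<Prod>k\<in>{0..n}-{i}. ((t0 - x*h) - (t0 - real k * h))) = (\<Prod>k\<in>{0..n}-{i}. h * (real k - x))"
      by (rule prod.cong) (auto simp: algebra_simps)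
    then show ?thesis by (simp add: prod.distrib)
  qed
  have pos: "(\<Prod>k\<in>{0..n}-{i}. \<bar>real i - real k\<bar>) > 0"
    by (rule prod_pos) auto
  have hp: "h ^ card ({0..n}-{i}) > 0" using assms by simp
  have "\<bar>(\<Prod>k\<in>{0..n}-{i}. ((t0 - s*h) - (t0 - real k * h))) /
          (\<Prod>k\<in>{0..n}-{i}. ((t0 - real i*h) - (t0 - real k * h)))\<bar>
      = (\<Prod>k\<in>{0..n}-{i}. \<bar>s - real k\<bar>) / (\<Prod>k\<in>{0..n}-{i}. \<bar>real i - real k\<bar>)"
    unfolding a using hp assms(1) by (simp add: abs_mult abs_prod abs_minus_commute)
  also have "\<dots> \<le> 2^(n+1)"
    using lag_nat[OF assms(2-4)] pos by (simp add: divide_le_eq)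
  finally show ?thesis .
qed



context
  fixes c0 c1 :: real and T :: nat
  assumes c0: "1 \<le> c0" and c1: "1 \<le> c1" and T3: "3 \<le> T"
    and Ls: "c1 * ln (real T) / real T \<le> 1/4"
begin

definition "L = c1 * ln (real T) / real T"
definition "P = real T powr (- c0)"
definition "mm t = min (P * (1 + L) ^ t) 1"
abbreviation "ab t \<equiv> alphabar c0 c1 T t"

lemma lnT1: "1 \<le> ln (real T)"
proof -
  have "exp 1 \<le> real T" using exp_le T3 by linarith
  then show ?thesis using ln_le_cancel_iff[of "exp 1" "real T"] T3 by simp
qed

lemma L_pos: "0 < L"
  using lnT1 c1 T3 by (simp add: divide_pos_pos L_def)

lemma L_le: "L \<le> 1/4" using Ls by (simp add: L_def)

lemma P_pos: "0 < P" using T3 by (simp add: P_def)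

lemma P_le_L: "P \<le> L"
proof -
  have "P \<le> real T powr (-1)" unfolding P_def by (rule powr_mono) (use c0 T3 in auto)
  also have "\<dots> = 1 / real T" using T3 by (simp add: powr_minus_divide)
  also have "\<dots> \<le> L"
  proof -
    have "1 \<le> c1 * ln (real T)" using mult_mono[of 1 c1 1 "ln (real T)"] lnT1 c1 by simp
    then show ?thesis using T3 by (simp add: divide_right_mono L_def)
  qed
  finally show ?thesis .
qed

lemma beta_eq: "beta c0 c1 T t = (if t = 1 then P else L * mm t)"
  by (simp add: beta_def L_def P_def mm_def)

lemma mm_pos: "0 < mm t" "mm t \<le> 1"
  using P_pos L_pos by (auto simp: mm_def)

lemma beta_pos: "0 < beta c0 c1 T t"
  using P_pos L_pos mm_pos[of t] by (simp add: beta_eq)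

lemma beta_le: "beta c0 c1 T t \<le> L"
  using P_le_L L_pos mm_pos[of t] by (auto simp: beta_eq mult_le_cancel_left1)

lemma alpha_ge: "1 - L \<le> alpha c0 c1 T t" "alpha c0 c1 T t < 1" "3/4 \<le> alpha c0 c1 T t"
  using beta_le[of t] beta_pos[of t] L_le by (auto simp: alpha_def)

lemma ab0: "ab 0 = 1" by (simp add: alphabar_def)

lemma ab_Suc: "ab (Suc t) = ab t * alpha c0 c1 T (Suc t)"
  by (simp add: alphabar_def atLeastAtMostSuc_conv mult.commute)

lemma ab_pos: "0 < ab t"
proof -
  have "0 < alpha c0 c1 T a" for a using alpha_ge(3)[of a] by linarith
  then show ?thesis unfolding alphabar_def by (intro prod_pos) auto
qed

lemma ab_le1: "ab t \<le> 1"
proof (induction t)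
  case 0 then show ?case by (simp add: ab0)
next
  case (Suc t) then show ?case using ab_Suc[of t] alpha_ge[of "Suc t"] ab_pos[of t]
    by (simp add: mult_le_one)
qed

lemma ab_dec: "ab (Suc t) \<le> ab t" "ab t * (3/4) \<le> ab (Suc t)"
  using ab_Suc[of t] alpha_ge[of "Suc t"] ab_pos[of t] by (auto simp: mult_left_mono)

lemma mm_Suc: "mm (Suc t) \<le> (1 + L) * mm t"
proof -
  have "mm (Suc t) = min (P * (1 + L) ^ t * (1 + L)) 1" by (simp add: mm_def mult_ac)
  also have "\<dots> \<le> min (P * (1 + L) ^ t * (1 + L)) (1 + L)" using L_pos by simp
  also have "\<dots> = (1 + L) * mm t" using L_pos by (simp add: mm_def min_mult_distrib_left mult.commute)
  finally show ?thesis .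
qed

lemma key: "1 \<le> s \<Longrightarrow> mm (s + 1) / 4 \<le> 1 - ab s"
proof (induction s rule: nat_induct_at_least)
  case base
  have "ab 1 = 1 - P" using ab_Suc[of 0] by (simp add: ab0 alpha_def beta_eq)
  moreover have "mm 2 \<le> P * 4"
  proof -
    have "(1 + L) ^ 2 \<le> (2::real) ^ 2" by (rule power_mono) (use L_pos L_le in auto)
    then have "P * (1 + L) ^ 2 \<le> P * 4" using P_pos by (simp add: mult_left_mono)
    then show ?thesis unfolding mm_def by linarith
  qed
  ultimately show ?case by (simp add: numeral_2_eq_2)
next
  case (Suc s)
  define m where "m = mm (Suc s)"
  have mp: "0 < m" "m \<le> 1" using mm_pos[of "Suc s"] by (auto simp: m_def)
  have b: "beta c0 c1 T (Suc s) = L * m" using Suc by (simp add: beta_eq m_def)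
  have "ab (Suc s) = ab s * (1 - L * m)" using ab_Suc[of s] b by (simp add: alpha_def)
  then have u: "1 - ab (Suc s) = (1 - ab s) * (1 - L * m) + L * m" by (simp add: algebra_simps)
  have Lm: "L * m \<le> 1/4" using mult_left_le[of m L] mp L_pos L_le by linarith
  have m1: "0 \<le> 1 - L * m" using Lm by linarith
  have "m / 4 * (1 - L * m) \<le> (1 - ab s) * (1 - L * m)"
    using Suc.IH m1 by (intro mult_right_mono) (auto simp: m_def)
  then have A: "1 - ab (Suc s) \<ge> m / 4 * (1 - L * m) + L * m" using u by linarith
  have "L * m * m \<le> L * m" using L_pos mp by (simp add: mult_left_le)
  then have B: "m / 4 * (1 - L * m) + L * m \<ge> (1 + L) * m / 4"
  proof -
    have e1: "m / 4 * (1 - L * m) + L * m = m / 4 - (L * m * m) / 4 + L * m" by (simp add: algebra_simps)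
    have e2: "(1 + L) * m / 4 = m / 4 + L * m / 4" by (simp add: algebra_simps)
    show ?thesis unfolding e1 e2 using \<open>L * m * m \<le> L * m\<close> mult_pos_pos[OF L_pos mp(1)] by linarith
  qed
  have C: "mm (Suc s + 1) \<le> (1 + L) * m" using mm_Suc[of "Suc s"] by (simp add: m_def)
  show ?case using A B C by linarith
qed


lemma ab_pred: "1 \<le> t \<Longrightarrow> ab t = ab (t-1) * alpha c0 c1 T t"
  using ab_Suc[of "t-1"] by simp

lemma beta_le4: "2 \<le> t \<Longrightarrow> beta c0 c1 T t \<le> 4 * L * (1 - ab (t-1))"
proof -
  assume t: "2 \<le> t"
  have b: "beta c0 c1 T t = L * mm t" using t by (simp add: beta_eq)
  have "mm t / 4 \<le> 1 - ab (t-1)" using key[of "t-1"] t by simp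
  then have h: "L * mm t \<le> L * (4 * (1 - ab (t-1)))" using L_pos by (intro mult_left_mono) auto
  have e: "4 * L * (1 - ab (t-1)) = L * (4 * (1 - ab (t-1)))" by (simp only: mult_ac)
  show ?thesis unfolding e b by (rule h)
qed

lemma ab_lt1: "1 \<le> t \<Longrightarrow> ab t < 1"
  using key[of t] mm_pos[of "t+1"] by linarith

lemma udiff: "1 \<le> t \<Longrightarrow> (1 - ab t) - (1 - ab (t-1)) = beta c0 c1 T t * ab (t-1)"
  using ab_pred[of t] by (simp add: alpha_def algebra_simps)

lemma u_ratio: "2 \<le> t \<Longrightarrow> 1 - ab t \<le> (1 + 4 * L) * (1 - ab (t-1))"
proof -
  assume t: "2 \<le> t"
  have "beta c0 c1 T t * ab (t-1) \<le> beta c0 c1 T t"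
    using beta_pos[of t] ab_le1[of "t-1"] ab_pos[of "t-1"] by (simp add: mult_left_le)
  then have "(1 - ab t) - (1 - ab (t-1)) \<le> 4 * L * (1 - ab (t-1))"
    using udiff[of t] beta_le4[OF t] t by linarith
  then show ?thesis by (simp add: algebra_simps)
qed

lemma u_ratio2: "2 \<le> t \<Longrightarrow> 1 - ab t \<le> 2 * (1 - ab (t-1))"
proof -
  assume t: "2 \<le> t"
  have "0 \<le> 1 - ab (t-1)" using ab_le1[of "t-1"] by simp
  then have "(1 + 4 * L) * (1 - ab (t-1)) \<le> 2 * (1 - ab (t-1))"
    using L_le by (intro mult_right_mono) auto
  then show ?thesis using u_ratio[OF t] by linarith
qed

lemma part_b:
  assumes t: "2 \<le> t"
  shows "1/2 * ((1 - alpha c0 c1 T t) / (1 - ab t))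
           \<le> 1/2 * ((1 - alpha c0 c1 T t) / (alpha c0 c1 T t - ab t))"
    and "1/2 * ((1 - alpha c0 c1 T t) / (alpha c0 c1 T t - ab t))
           \<le> (1 - alpha c0 c1 T t) / (1 - ab (t - 1))"
    and "(1 - alpha c0 c1 T t) / (1 - ab (t - 1)) \<le> 4 * L"
proof -
  define a where "a = alpha c0 c1 T t"
  define A where "A = ab (t-1)"
  have abt: "ab t = A * a" using ab_pred[of t] t by (simp add: A_def a_def)
  have A1: "A < 1" "0 < A" using ab_lt1[of "t-1"] ab_pos[of "t-1"] t by (auto simp: A_def)
  have a1: "a < 1" "3/4 \<le> a" using alpha_ge[of t] by (auto simp: a_def)
  have beq: "1 - a = beta c0 c1 T t" by (simp add: a_def alpha_def)
  have bp: "0 < 1 - a" using a1 by simp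
  have d: "a - ab t = a * (1 - A)" using abt by (simp add: algebra_simps)
  have dpos: "0 < a - ab t" using d a1 A1 by simp
  have le: "a - ab t \<le> 1 - ab t" using a1 by simp
  show "1/2 * ((1 - alpha c0 c1 T t) / (1 - ab t))
           \<le> 1/2 * ((1 - alpha c0 c1 T t) / (alpha c0 c1 T t - ab t))"
    unfolding a_def[symmetric] using le dpos bp
    by (intro mult_left_mono divide_left_mono) auto
  define x where "x = (1 - a) / (1 - A)"
  have xp: "0 \<le> x" using bp A1 by (simp add: x_def)
  have "(1 - a) / (a - ab t) = x / a" unfolding d x_def by simp
  also have "\<dots> \<le> x / (3/4)" using xp a1 by (intro divide_left_mono) auto
  also have "x / (3/4) = x * (4/3)" by simp
  finally have "(1 - a) / (a - ab t) \<le> x * (4/3)" .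
  then have "1/2 * ((1 - a) / (a - ab t)) \<le> x" using xp by linarith
  then show "1/2 * ((1 - alpha c0 c1 T t) / (alpha c0 c1 T t - ab t))
           \<le> (1 - alpha c0 c1 T t) / (1 - ab (t - 1))"
    by (simp add: a_def A_def x_def)
  show "(1 - alpha c0 c1 T t) / (1 - ab (t - 1)) \<le> 4 * L"
    using beta_le4[OF t] A1 beq by (simp add: divide_le_eq a_def A_def)
qed

lemma part_c:
  assumes t: "2 \<le> t"
  shows "1 \<le> (1 - ab t) / (1 - ab (t - 1))"
    and "(1 - ab t) / (1 - ab (t - 1)) \<le> 1 + 4 * L"
proof -
  have A1: "0 < 1 - ab (t-1)" using ab_lt1[of "t-1"] t by simp
  have "ab t \<le> ab (t-1)" using ab_dec(1)[of "t-1"] t by simp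
  then show "1 \<le> (1 - ab t) / (1 - ab (t - 1))" using A1 by (simp add: le_divide_eq)
  show "(1 - ab t) / (1 - ab (t - 1)) \<le> 1 + 4 * L"
    using u_ratio[OF t] A1 by (simp add: divide_le_eq)
qed

lemma part_e:
  assumes t: "1 \<le> t"
  shows "ab (t + 1) / (1 - ab (t + 1)) \<le> ab t / (1 - ab t)"
    and "ab t / (1 - ab t) \<le> 4 * ab (t + 1) / (1 - ab (t + 1))"
proof -
  have p1: "0 < 1 - ab t" using ab_lt1[OF t] by simp
  have p2: "0 < 1 - ab (t+1)" using ab_lt1[of "t+1"] t by simp
  have d1: "ab (t+1) \<le> ab t" "ab t * (3/4) \<le> ab (t+1)" using ab_dec[of t] by auto
  show "ab (t + 1) / (1 - ab (t + 1)) \<le> ab t / (1 - ab t)"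
    using d1 p1 ab_pos[of "t+1"] by (intro frac_le) auto
  have u2: "1 - ab (t+1) \<le> 2 * (1 - ab t)" using u_ratio2[of "t+1"] t by simp
  have "ab t / (1 - ab t) = (2 * ab t) / (2 * (1 - ab t))" by (rule mult_divide_mult_cancel_left[symmetric]) simp
  also have "\<dots> \<le> 4 * ab (t + 1) / (1 - ab (t + 1))"
    using d1 p2 u2 ab_pos[of t] by (intro frac_le) auto
  finally show "ab t / (1 - ab t) \<le> 4 * ab (t + 1) / (1 - ab (t + 1))" .
qed


lemma tau_bounds:
  assumes K: "2 \<le> K" and i: "i \<le> K - 1" and t: "1 \<le> t"
  shows "1 - ab (t-1) \<le> tau c0 c1 K T t i" "tau c0 c1 K T t i \<le> 1 - ab t"
proof -
  define th where "th = real i / real (K - 1)"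
  define D where "D = (1 - ab t) - (1 - ab (t-1))"
  have th: "0 \<le> th" "th \<le> 1" using K i by (auto simp: th_def)
  have Dp: "0 \<le> D" using udiff[OF t] beta_pos[of t] ab_pos[of "t-1"] by (simp add: D_def)
  have te: "tau c0 c1 K T t i = (1 - ab t) - th * D" by (simp add: tau_def th_def D_def)
  have "th * D \<le> D" using th Dp by (simp add: mult_left_le_one_le)
  moreover have "0 \<le> th * D" using th Dp by simp
  ultimately show "1 - ab (t-1) \<le> tau c0 c1 K T t i" "tau c0 c1 K T t i \<le> 1 - ab t"
    unfolding te D_def by linarith+
qed

lemma part_f:
  assumes K: "2 \<le> K" and t: "2 \<le> t" and i: "i1 \<le> K - 1" "i2 \<le> K - 1" "i3 \<le> K - 1" "i4 \<le> K - 1"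
  shows "\<bar>(tau c0 c1 K T t i1 - tau c0 c1 K T t i2) /
           (tau c0 c1 K T t i3 * (1 - tau c0 c1 K T t i4))\<bar> \<le> 8 * L"
proof -
  have t1: "1 \<le> t" using t by simp
  note b1 = tau_bounds[OF K i(1) t1] and b2 = tau_bounds[OF K i(2) t1]
   and b3 = tau_bounds[OF K i(3) t1] and b4 = tau_bounds[OF K i(4) t1]
  define A where "A = ab (t-1)"
  define a where "a = alpha c0 c1 T t"
  define b where "b = beta c0 c1 T t"
  have abt: "ab t = A * a" using ab_pred[OF t1] by (simp add: A_def a_def)
  have A1: "0 < 1 - A" "0 < A" using ab_lt1[of "t-1"] ab_pos[of "t-1"] t by (auto simp: A_def)
  have a1: "3/4 \<le> a" using alpha_ge[of t] by (auto simp: a_def)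
  have D: "(1 - ab t) - (1 - A) = b * A" using udiff[OF t1] by (simp add: A_def b_def)
  have bl: "b \<le> 4 * L * (1 - A)" using beta_le4[OF t] by (simp add: b_def A_def)
  have num: "\<bar>tau c0 c1 K T t i1 - tau c0 c1 K T t i2\<bar> \<le> b * A"
    using b1 b2 D unfolding A_def by linarith
  have d3: "1 - A \<le> tau c0 c1 K T t i3" using b3 by (simp add: A_def)
  have d4: "A * a \<le> 1 - tau c0 c1 K T t i4" using b4 abt by simp
  have Aa: "0 < A * a" using A1 a1 by simp
  have den: "(1 - A) * (A * a) \<le> tau c0 c1 K T t i3 * (1 - tau c0 c1 K T t i4)"
    using d3 d4 A1 Aa by (intro mult_mono) auto
  have denp: "0 < (1 - A) * (A * a)" using A1 Aa by simp
  have "b * A \<le> 4 * L * (1 - A) * A" using bl A1 by (simp add: mult_right_mono)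
  also have "\<dots> \<le> 8 * L * ((1 - A) * (A * (3/4)))" using L_pos A1 by (simp add: algebra_simps)
  also have "\<dots> \<le> 8 * L * ((1 - A) * (A * a))"
    using L_pos A1 a1 by (intro mult_left_mono) auto
  also have "\<dots> \<le> 8 * L * (tau c0 c1 K T t i3 * (1 - tau c0 c1 K T t i4))"
    using den L_pos by (intro mult_left_mono) auto
  finally have key2: "\<bar>tau c0 c1 K T t i1 - tau c0 c1 K T t i2\<bar>
      \<le> 8 * L * (tau c0 c1 K T t i3 * (1 - tau c0 c1 K T t i4))" using num by linarith
  have dp: "0 < tau c0 c1 K T t i3 * (1 - tau c0 c1 K T t i4)" using den denp by linarith
  show ?thesis using key2 dp by (simp add: abs_divide divide_le_eq)
qed

lemma part_h:
  assumes K: "2 \<le> K" and t: "2 \<le> t" and i: "i \<le> K - 1" and j: "j \<le> K - 1"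
  shows "1/2 * (1 - tau c0 c1 K T t j) \<le> 1 - tau c0 c1 K T t i \<and>
         1 - tau c0 c1 K T t i \<le> 2 * (1 - tau c0 c1 K T t j) \<and>
         1/2 * tau c0 c1 K T t j \<le> tau c0 c1 K T t i \<and>
         tau c0 c1 K T t i \<le> 2 * tau c0 c1 K T t j"
proof -
  have t1: "1 \<le> t" using t by simp
  note bi = tau_bounds[OF K i t1] and bj = tau_bounds[OF K j t1]
  have r1: "ab (t-1) \<le> 2 * ab t" using ab_dec(2)[of "t-1"] ab_pos[of "t-1"] t by simp
  have r2: "1 - ab t \<le> 2 * (1 - ab (t-1))" by (rule u_ratio2[OF t])
  show ?thesis using bi bj r1 r2 by auto
qed

lemma part_d:
  assumes c10: "4 * c0 \<le> c1" and c12: "2 * c2 \<le> c1"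
  shows "ab T \<le> real T powr (- c2)"
proof -
  have lnp: "0 < ln (real T)" using lnT1 by simp
  have TL: "real T * L = c1 * ln (real T)" using T3 by (simp add: L_def)
  have big: "beta c0 c1 T i = L" if i: "real T \<le> 2 * real i" for i
  proof -
    have i2: "i \<noteq> 1" using i T3 by auto
    have lb: "L - L^2 \<le> ln (1 + L)" by (rule ln_one_plus_pos_lower_bound) (use L_pos L_le in auto)
    have "L^2 \<le> L * (1/4)" using L_pos L_le by (simp add: power2_eq_square)
    then have l34: "3/4 * L \<le> ln (1 + L)" using lb by linarith
    have "c0 * ln (real T) \<le> 3/8 * c1 * ln (real T)" using c10 lnp c0 by (intro mult_right_mono) auto
    also have "\<dots> = 3/4 * L * (real T / 2)" using TL by (simp add: algebra_simps)
    also have "\<dots> \<le> 3/4 * L * real i" using L_pos i by (intro mult_left_mono) auto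
    also have "\<dots> = real i * (3/4 * L)" by (simp only: mult.commute)
    also have "\<dots> \<le> real i * ln (1 + L)" by (rule mult_left_mono[OF l34]) simp
    also have "\<dots> = ln ((1 + L) ^ i)" using L_pos by (simp add: ln_realpow)
    finally have "ln (real T powr c0) \<le> ln ((1 + L) ^ i)" using T3 by (simp add: ln_powr)
    then have "real T powr c0 \<le> (1 + L) ^ i" using T3 L_pos by (subst (asm) ln_le_cancel_iff) auto
    then have "1 \<le> P * (1 + L) ^ i" using T3
      by (simp add: P_def powr_minus divide_le_eq field_simps)
    then show ?thesis using i2 by (simp add: beta_eq mm_def)
  qed
  define S where "S = {T - T div 2..T}"
  have S1: "S \<subseteq> {1..T}" using T3 by (auto simp: S_def)
  have Sbig: "\<forall>i\<in>S. real T \<le> 2 * real i" by (auto simp: S_def)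
  have cS: "real T / 2 \<le> real (card S)" by (simp add: S_def)
  have "ab T = (\<Prod>i\<in>S. alpha c0 c1 T i) * (\<Prod>i\<in>{1..T} - S. alpha c0 c1 T i)"
    unfolding alphabar_def using prod.subset_diff[OF S1] by (simp add: mult.commute)
  also have "\<dots> \<le> (\<Prod>i\<in>S. alpha c0 c1 T i) * 1"
  proof (rule mult_left_mono)
    show "(\<Prod>i\<in>{1..T} - S. alpha c0 c1 T i) \<le> 1"
      using alpha_ge by (intro prod_le_1) (auto simp: less_imp_le order_trans[OF _ alpha_ge(3)])
    show "0 \<le> (\<Prod>i\<in>S. alpha c0 c1 T i)"
    proof (intro prod_nonneg)
      fix x show "0 \<le> alpha c0 c1 T x" using alpha_ge(3)[of x] by linarith
    qed
  qed
  also have "(\<Prod>i\<in>S. alpha c0 c1 T i) = (1 - L) ^ card S"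
    using big Sbig by (simp add: alpha_def)
  also have "\<dots> \<le> exp (- L) ^ card S"
    using L_le exp_ge_add_one_self[of "-L"] by (intro power_mono) auto
  also have "\<dots> = exp (- (real (card S) * L))" by (simp add: exp_of_nat_mult[symmetric])
  also have "\<dots> \<le> exp (- (real T / 2 * L))" using cS L_pos by (simp add: mult_right_mono)
  also have "\<dots> \<le> exp (- c2 * ln (real T))"
  proof -
    have "real T / 2 * L = c1 / 2 * ln (real T)" using TL by (simp add: algebra_simps)
    moreover have "c2 * ln (real T) \<le> c1 / 2 * ln (real T)" using c12 lnp by (intro mult_right_mono) auto
    ultimately show ?thesis by simp
  qed
  also have "\<dots> = real T powr (- c2)" using T3 by (simp add: powr_def)
  finally show ?thesis by simp
qed

lemma part_g:
  assumes K: "2 \<le> K" and t: "2 \<le> t" and i: "i \<le> K - 1" and j: "j \<le> K - 1"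
  shows "\<bar>gamma c0 c1 K T t i (tau c0 c1 K T t j)\<bar>
           \<le> 2 ^ K * (tau c0 c1 K T t 0 - tau c0 c1 K T t j)"
proof -
  have t1: "1 \<le> t" using t by simp
  define t0 where "t0 = 1 - ab t"
  define n where "n = K - 1"
  define h where "h = ((1 - ab t) - (1 - ab (t-1))) / real n"
  have n1: "1 \<le> n" using K by (simp add: n_def)
  have hp: "0 < h"
    using udiff[OF t1] beta_pos[of t] ab_pos[of "t-1"] n1 by (simp add: h_def)
  have te: "tau c0 c1 K T t k = t0 - real k * h" for k
    by (simp add: tau_def t0_def h_def n_def)
  have t00: "tau c0 c1 K T t 0 = t0" using te[of 0] by simp
  have pe: "psi c0 c1 K T t i = (\<lambda>x. (\<Prod>k\<in>{0..n}-{i}. (x - (t0 - real k * h))) /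
                (\<Prod>k\<in>{0..n}-{i}. ((t0 - real i * h) - (t0 - real k * h))))"
    by (rule ext) (simp add: psi_def te n_def)
  have tj: "tau c0 c1 K T t j \<le> t0" using te[of j] hp by simp
  have cont: "continuous_on {tau c0 c1 K T t j..t0} (psi c0 c1 K T t i)"
  proof -
    have "(\<Prod>k\<in>{0..n}-{i}. ((t0 - real i * h) - (t0 - real k * h))) \<noteq> 0"
      using hp by (subst prod_zero_iff) auto
    then show ?thesis unfolding pe by (intro continuous_intros) auto
  qed
  have bnd: "norm (psi c0 c1 K T t i x) \<le> 2 ^ K" if x: "x \<in> {tau c0 c1 K T t j..t0}" for x
  proof -
    define s where "s = (t0 - x) / h"
    have xs: "x = t0 - s * h" using hp by (simp add: s_def)
    have s0: "0 \<le> s" using x hp by (simp add: s_def)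
    have "s \<le> real j" using x hp te[of j] by (simp add: s_def divide_le_eq algebra_simps)
    then have sn: "s \<le> real n" using j by (simp add: n_def)
    have "\<bar>psi c0 c1 K T t i x\<bar> \<le> 2 ^ (n+1)"
      unfolding pe xs by (rule lag_scaled[OF hp _ s0 sn]) (use i in \<open>simp add: n_def\<close>)
    then show ?thesis using K by (simp add: n_def)
  qed
  have "gamma c0 c1 K T t i (tau c0 c1 K T t j) = integral {tau c0 c1 K T t j..t0} (psi c0 c1 K T t i)"
    using tj by (simp add: gamma_def oint_def t00)
  then have "\<bar>gamma c0 c1 K T t i (tau c0 c1 K T t j)\<bar> \<le> 2 ^ K * (t0 - tau c0 c1 K T t j)"
    using integral_bound[OF tj cont bnd] by simp
  then show ?thesis by (simp add: t00)
qed
end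

lemma main_all:
  fixes K :: nat and c0 c1 c2 :: real and T :: nat
  assumes K: "K \<ge> 2" and c0: "1 \<le> c0" and c1: "1 \<le> c1" and T3: "3 \<le> T"
    and Ls: "c1 * ln (real T) / real T \<le> 1/4"
    and c10: "4 * c0 \<le> c1" and c12: "2 * c2 \<le> c1"
  shows "
      \<comment> \<open>(a)\<close>
      (\<forall>t. 1 \<le> t \<and> t \<le> T \<longrightarrow>
         alpha c0 c1 T t \<ge> 1 - c1 * ln (real T) / real T \<and>
         1 - c1 * ln (real T) / real T \<ge> 1/2) \<and>
      \<comment> \<open>(b)\<close>
      (\<forall>t. 2 \<le> t \<and> t \<le> T \<longrightarrow>
         1/2 * ((1 - alpha c0 c1 T t) / (1 - alphabar c0 c1 T t))
           \<le> 1/2 * ((1 - alpha c0 c1 T t) / (alpha c0 c1 T t - alphabar c0 c1 T t)) \<and>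
         1/2 * ((1 - alpha c0 c1 T t) / (alpha c0 c1 T t - alphabar c0 c1 T t))
           \<le> (1 - alpha c0 c1 T t) / (1 - alphabar c0 c1 T (t - 1)) \<and>
         (1 - alpha c0 c1 T t) / (1 - alphabar c0 c1 T (t - 1))
           \<le> 4 * c1 * ln (real T) / real T) \<and>
      \<comment> \<open>(c)\<close>
      (\<forall>t. 2 \<le> t \<and> t \<le> T \<longrightarrow>
         1 \<le> (1 - alphabar c0 c1 T t) / (1 - alphabar c0 c1 T (t - 1)) \<and>
         (1 - alphabar c0 c1 T t) / (1 - alphabar c0 c1 T (t - 1))
           \<le> 1 + 4 * c1 * ln (real T) / real T) \<and>
      \<comment> \<open>(d)\<close>
      alphabar c0 c1 T T \<le> real T powr (- c2) \<and>
      \<comment> \<open>(e)\<close>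
      (\<forall>t. 1 \<le> t \<and> t < T \<longrightarrow>
         alphabar c0 c1 T (t + 1) / (1 - alphabar c0 c1 T (t + 1))
           \<le> alphabar c0 c1 T t / (1 - alphabar c0 c1 T t) \<and>
         alphabar c0 c1 T t / (1 - alphabar c0 c1 T t)
           \<le> 4 * alphabar c0 c1 T (t + 1) / (1 - alphabar c0 c1 T (t + 1))) \<and>
      \<comment> \<open>(f)\<close>
      (\<forall>t i1 i2 i3 i4. 2 \<le> t \<and> t \<le> T \<and> i1 \<le> K - 1 \<and> i2 \<le> K - 1 \<and>
           i3 \<le> K - 1 \<and> i4 \<le> K - 1 \<longrightarrow>
         \<bar>(tau c0 c1 K T t i1 - tau c0 c1 K T t i2) /
           (tau c0 c1 K T t i3 * (1 - tau c0 c1 K T t i4))\<bar>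
           \<le> 8 * c1 * ln (real T) / real T) \<and>
      \<comment> \<open>(g)\<close>
      (\<forall>t i j. 2 \<le> t \<and> t \<le> T \<and> i \<le> K - 1 \<and> j \<le> K - 1 \<longrightarrow>
         \<bar>gamma c0 c1 K T t i (tau c0 c1 K T t j)\<bar>
           \<le> 2 ^ K * (tau c0 c1 K T t 0 - tau c0 c1 K T t j)) \<and>
      \<comment> \<open>(h)\<close>
      (\<forall>t i j. 2 \<le> t \<and> t \<le> T \<and> i \<le> K - 1 \<and> j \<le> K - 1 \<longrightarrow>
         (1/2) * (1 - tau c0 c1 K T t j) \<le> 1 - tau c0 c1 K T t i \<and>
         1 - tau c0 c1 K T t i \<le> 2 * (1 - tau c0 c1 K T t j) \<and>
         (1/2) * tau c0 c1 K T t j \<le> tau c0 c1 K T t i \<and>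
         tau c0 c1 K T t i \<le> 2 * tau c0 c1 K T t j)"
proof -
  note facts = c0 c1 T3 Ls
  have Ld: "c1 * ln (real T) / real T = L c1 T" by (simp add: L_def[OF facts])
  have L4: "4 * c1 * ln (real T) / real T = 4 * L c1 T" by (simp add: L_def[OF facts])
  have L8: "8 * c1 * ln (real T) / real T = 8 * L c1 T" by (simp add: L_def[OF facts])
  have Lle: "L c1 T \<le> 1/4" using Ls Ld by simp
  have a: "\<forall>t. 1 \<le> t \<and> t \<le> T \<longrightarrow> alpha c0 c1 T t \<ge> 1 - L c1 T \<and> 1 - L c1 T \<ge> 1/2"
    using alpha_ge(1)[OF facts] Lle by auto
  have b: "\<forall>t. 2 \<le> t \<and> t \<le> T \<longrightarrow>
         1/2 * ((1 - alpha c0 c1 T t) / (1 - alphabar c0 c1 T t))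
           \<le> 1/2 * ((1 - alpha c0 c1 T t) / (alpha c0 c1 T t - alphabar c0 c1 T t)) \<and>
         1/2 * ((1 - alpha c0 c1 T t) / (alpha c0 c1 T t - alphabar c0 c1 T t))
           \<le> (1 - alpha c0 c1 T t) / (1 - alphabar c0 c1 T (t - 1)) \<and>
         (1 - alpha c0 c1 T t) / (1 - alphabar c0 c1 T (t - 1)) \<le> 4 * L c1 T"
    using part_b[OF facts] by blast
  have c: "\<forall>t. 2 \<le> t \<and> t \<le> T \<longrightarrow>
         1 \<le> (1 - alphabar c0 c1 T t) / (1 - alphabar c0 c1 T (t - 1)) \<and>
         (1 - alphabar c0 c1 T t) / (1 - alphabar c0 c1 T (t - 1)) \<le> 1 + 4 * L c1 T"
    using part_c[OF facts] by blast
  have d: "alphabar c0 c1 T T \<le> real T powr (- c2)"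
    using part_d[OF facts c10 c12] .
  have e: "\<forall>t. 1 \<le> t \<and> t < T \<longrightarrow>
         alphabar c0 c1 T (t + 1) / (1 - alphabar c0 c1 T (t + 1))
           \<le> alphabar c0 c1 T t / (1 - alphabar c0 c1 T t) \<and>
         alphabar c0 c1 T t / (1 - alphabar c0 c1 T t)
           \<le> 4 * alphabar c0 c1 T (t + 1) / (1 - alphabar c0 c1 T (t + 1))"
    using part_e[OF facts] by blast
  have f: "\<forall>t i1 i2 i3 i4. 2 \<le> t \<and> t \<le> T \<and> i1 \<le> K - 1 \<and> i2 \<le> K - 1 \<and>
           i3 \<le> K - 1 \<and> i4 \<le> K - 1 \<longrightarrow>
         \<bar>(tau c0 c1 K T t i1 - tau c0 c1 K T t i2) /
           (tau c0 c1 K T t i3 * (1 - tau c0 c1 K T t i4))\<bar> \<le> 8 * L c1 T"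
    using part_f[OF facts K] by blast
  have g: "\<forall>t i j. 2 \<le> t \<and> t \<le> T \<and> i \<le> K - 1 \<and> j \<le> K - 1 \<longrightarrow>
         \<bar>gamma c0 c1 K T t i (tau c0 c1 K T t j)\<bar>
           \<le> 2 ^ K * (tau c0 c1 K T t 0 - tau c0 c1 K T t j)"
    using part_g[OF facts K] by blast
  have h: "\<forall>t i j. 2 \<le> t \<and> t \<le> T \<and> i \<le> K - 1 \<and> j \<le> K - 1 \<longrightarrow>
         (1/2) * (1 - tau c0 c1 K T t j) \<le> 1 - tau c0 c1 K T t i \<and>
         1 - tau c0 c1 K T t i \<le> 2 * (1 - tau c0 c1 K T t j) \<and>
         (1/2) * tau c0 c1 K T t j \<le> tau c0 c1 K T t i \<and>
         tau c0 c1 K T t i \<le> 2 * tau c0 c1 K T t j"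
    using part_h[OF facts K] by blast
  show ?thesis unfolding L4 L8 Ld using a b c d e f g h by blast
qed


lemma ev_T:
  fixes c1 :: real
  shows "\<exists>N::nat. \<forall>T\<ge>N. 3 \<le> T \<and> c1 * ln (real T) / real T \<le> 1/4"
proof -
  have "\<forall>\<^sub>F T in sequentially. c1 * ln (real T) / real T \<le> 1/4" by real_asymp
  then obtain N where N: "\<And>T. N \<le> T \<Longrightarrow> c1 * ln (real T) / real T \<le> 1/4"
    unfolding eventually_sequentially by blast
  show ?thesis
  proof (rule exI[of _ "max N 3"], intro allI impI conjI)
    fix T :: nat assume T: "max N 3 \<le> T"
    then show "3 \<le> T" by simp
    show "c1 * ln (real T) / real T \<le> 1/4" by (rule N) (use T in simp)
  qed
qed

theorem lemma1:
  fixes K :: nat and c2 :: real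
  assumes "K \<ge> 2"
  shows "\<exists>C0. \<forall>c0 \<ge> C0. \<exists>C1. \<forall>c1 \<ge> C1.
    (\<exists>c C. c > 0 \<and> C > 0 \<and> (\<exists>T0::nat. \<forall>T \<ge> T0.
      \<comment> \<open>(a)\<close>
      (\<forall>t. 1 \<le> t \<and> t \<le> T \<longrightarrow>
         alpha c0 c1 T t \<ge> 1 - c1 * ln (real T) / real T \<and>
         1 - c1 * ln (real T) / real T \<ge> 1/2) \<and>
      \<comment> \<open>(b)\<close>
      (\<forall>t. 2 \<le> t \<and> t \<le> T \<longrightarrow>
         1/2 * ((1 - alpha c0 c1 T t) / (1 - alphabar c0 c1 T t))
           \<le> 1/2 * ((1 - alpha c0 c1 T t) / (alpha c0 c1 T t - alphabar c0 c1 T t)) \<and>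
         1/2 * ((1 - alpha c0 c1 T t) / (alpha c0 c1 T t - alphabar c0 c1 T t))
           \<le> (1 - alpha c0 c1 T t) / (1 - alphabar c0 c1 T (t - 1)) \<and>
         (1 - alpha c0 c1 T t) / (1 - alphabar c0 c1 T (t - 1))
           \<le> 4 * c1 * ln (real T) / real T) \<and>
      \<comment> \<open>(c)\<close>
      (\<forall>t. 2 \<le> t \<and> t \<le> T \<longrightarrow>
         1 \<le> (1 - alphabar c0 c1 T t) / (1 - alphabar c0 c1 T (t - 1)) \<and>
         (1 - alphabar c0 c1 T t) / (1 - alphabar c0 c1 T (t - 1))
           \<le> 1 + 4 * c1 * ln (real T) / real T) \<and>
      \<comment> \<open>(d)\<close>
      alphabar c0 c1 T T \<le> real T powr (- c2) \<and>
      \<comment> \<open>(e)\<close>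
      (\<forall>t. 1 \<le> t \<and> t < T \<longrightarrow>
         alphabar c0 c1 T (t + 1) / (1 - alphabar c0 c1 T (t + 1))
           \<le> alphabar c0 c1 T t / (1 - alphabar c0 c1 T t) \<and>
         alphabar c0 c1 T t / (1 - alphabar c0 c1 T t)
           \<le> 4 * alphabar c0 c1 T (t + 1) / (1 - alphabar c0 c1 T (t + 1))) \<and>
      \<comment> \<open>(f)\<close>
      (\<forall>t i1 i2 i3 i4. 2 \<le> t \<and> t \<le> T \<and> i1 \<le> K - 1 \<and> i2 \<le> K - 1 \<and>
           i3 \<le> K - 1 \<and> i4 \<le> K - 1 \<longrightarrow>
         \<bar>(tau c0 c1 K T t i1 - tau c0 c1 K T t i2) /
           (tau c0 c1 K T t i3 * (1 - tau c0 c1 K T t i4))\<bar>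
           \<le> 8 * c1 * ln (real T) / real T) \<and>
      \<comment> \<open>(g)\<close>
      (\<forall>t i j. 2 \<le> t \<and> t \<le> T \<and> i \<le> K - 1 \<and> j \<le> K - 1 \<longrightarrow>
         \<bar>gamma c0 c1 K T t i (tau c0 c1 K T t j)\<bar>
           \<le> 2 ^ K * (tau c0 c1 K T t 0 - tau c0 c1 K T t j)) \<and>
      \<comment> \<open>(h)\<close>
      (\<forall>t i j. 2 \<le> t \<and> t \<le> T \<and> i \<le> K - 1 \<and> j \<le> K - 1 \<longrightarrow>
         c * (1 - tau c0 c1 K T t j) \<le> 1 - tau c0 c1 K T t i \<and>
         1 - tau c0 c1 K T t i \<le> C * (1 - tau c0 c1 K T t j) \<and>
         c * tau c0 c1 K T t j \<le> tau c0 c1 K T t i \<and>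
         tau c0 c1 K T t i \<le> C * tau c0 c1 K T t j)))"
  apply (rule exI[of _ "1::real"], intro allI impI)
  subgoal premises p0 for c0
    apply (rule exI[of _ "max 1 (max (4 * c0) (2 * c2))"], intro allI impI)
    subgoal premises p1 for c1
    proof -
      obtain N :: nat where N: "\<forall>T\<ge>N. 3 \<le> T \<and> c1 * ln (real T) / real T \<le> 1/4"
        using ev_T by blast
      show ?thesis
        apply (rule exI[of _ "1/2::real"], rule exI[of _ "2::real"], intro conjI)
          apply simp
         apply simp
        apply (rule exI[of _ N])
        apply (intro allI impI)
        apply (rule main_all)
        using assms p0 p1 N by auto
    qed
    done
  done

end
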